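(* Let $\mathcal C$ be a Markov category with conditionals. Then every morphism in $\mathcal C$ has an initial dilation.
   Context: A Markov category is a symmetric monoidal category $(\mathcal C,\otimes,I)$ with commutative comonoids $\mathrm{copy}_X\colon X\to X\otimes X$, $\mathrm{del}_X\colon X\to I$ compatible with $\otimes$, with $I$ terminal. For $f\colon A\to X\otimes Y$ write $f_X=(\mathrm{id}_X\otimes\mathrm{del}_Y)\circ f$. A conditional of $f$ given $X$ is a morphism $f_{|X}\colon X\otimes A\to Y$ with $f=(\mathrm{id}_X\otimes f_{|X})\circ(\mathrm{copy}_X\otimes\mathrm{id}_A)\circ(f_X\otimes\mathrm{id}_A)\circ\mathrm{copy}_A$; $\mathcal C$ has conditionals if every such $f$ has a conditional. A dilation of $p\colon A\to X$ is $\pi\colon A\to X\otimes E$ with $(\mathrm{id}_X\otimes\mathrm{del}_E)\circ\pi=p$. For a dilation $\pi\colon A\to X\otimes E$ and $f_1,f_2\colon E\to E'$, these are $\pi$-dilationally equal if for every dilation $\rho\colon A\to X\otimes E\otimes F$ of $\pi$, $(\mathrm{id}_X\otimes f_1\otimes\mathrm{id}_F)\circ\rho=(\mathrm{id}_X\otimes f_2\otimes\mathrm{id}_F)\circ\rho$. A dilation $\pi\colon A\to X\otimes E$ of $p$ is initial if for every dilation $\pi'\colon A\to X\otimes E'$ of $p$ there is $f\colon E\to E'$ with $(\mathrm{id}_X\otimes f)\circ\pi=\pi'$, unique up to $\pi$-dilational equality. *)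

theory Defs
  imports Main
begin

text \<open>Data of a (non-strict) symmetric monoidal category with chosen copy/delete maps.
  Objects are all elements of the type 'o; morphisms are the elements of mArr.
  mComp g f is the composite g after f; mTenM is the tensor on morphisms;
  mAssoc X Y Z : (X*Y)*Z -> X*(Y*Z); mLunit X : I*X -> X; mRunit X : X*I -> X;
  mBraid X Y : X*Y -> Y*X.\<close>

record ('o, 'm) mcat =
  mArr :: "'m set"
  mDom :: "'m \<Rightarrow> 'o"
  mCod :: "'m \<Rightarrow> 'o"
  mComp :: "'m \<Rightarrow> 'm \<Rightarrow> 'm"
  mId :: "'o \<Rightarrow> 'm"
  mTen :: "'o \<Rightarrow> 'o \<Rightarrow> 'o"
  mTenM :: "'m \<Rightarrow> 'm \<Rightarrow> 'm"
  mUnit :: "'o"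
  mAssoc :: "'o \<Rightarrow> 'o \<Rightarrow> 'o \<Rightarrow> 'm"
  mLunit :: "'o \<Rightarrow> 'm"
  mRunit :: "'o \<Rightarrow> 'm"
  mBraid :: "'o \<Rightarrow> 'o \<Rightarrow> 'm"
  mCopy :: "'o \<Rightarrow> 'm"
  mDel :: "'o \<Rightarrow> 'm"

definition hom :: "('o, 'm) mcat \<Rightarrow> 'o \<Rightarrow> 'o \<Rightarrow> 'm set" where
  "hom C A B = {f \<in> mArr C. mDom C f = A \<and> mCod C f = B}"

definition iso_arr :: "('o, 'm) mcat \<Rightarrow> 'm \<Rightarrow> 'o \<Rightarrow> 'o \<Rightarrow> bool" where
  "iso_arr C f A B \<longleftrightarrow> f \<in> hom C A B \<and>
     (\<exists>g \<in> hom C B A. mComp C g f = mId C A \<and> mComp C f g = mId C B)"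

definition inv_arr :: "('o, 'm) mcat \<Rightarrow> 'm \<Rightarrow> 'm" where
  "inv_arr C f = (THE g. g \<in> hom C (mCod C f) (mDom C f) \<and>
      mComp C g f = mId C (mDom C f) \<and> mComp C f g = mId C (mCod C f))"

text \<open>Middle-four interchange (X*Y)*(Z*W) -> (X*Z)*(Y*W), built from associators and braiding.\<close>
definition mid4 :: "('o, 'm) mcat \<Rightarrow> 'o \<Rightarrow> 'o \<Rightarrow> 'o \<Rightarrow> 'o \<Rightarrow> 'm" where
  "mid4 C X Y Z W =
     mComp C (inv_arr C (mAssoc C X Z (mTen C Y W)))
      (mComp C (mTenM C (mId C X)
                  (mComp C (mAssoc C Z Y W)
                    (mComp C (mTenM C (mBraid C Y Z) (mId C W))
                       (inv_arr C (mAssoc C Y Z W)))))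
        (mAssoc C X Y (mTen C Z W)))"

locale markov_category =
  fixes C :: "('o, 'm) mcat"
  assumes id_hom: "\<And>X. mId C X \<in> hom C X X"
    and comp_hom: "\<And>f g A B D. f \<in> hom C A B \<Longrightarrow> g \<in> hom C B D \<Longrightarrow> mComp C g f \<in> hom C A D"
    and comp_id_right: "\<And>f A B. f \<in> hom C A B \<Longrightarrow> mComp C f (mId C A) = f"
    and comp_id_left: "\<And>f A B. f \<in> hom C A B \<Longrightarrow> mComp C (mId C B) f = f"
    and comp_assoc: "\<And>f g h A B D E. f \<in> hom C A B \<Longrightarrow> g \<in> hom C B D \<Longrightarrow> h \<in> hom C D E \<Longrightarrow>
        mComp C h (mComp C g f) = mComp C (mComp C h g) f"
    and ten_hom: "\<And>f g A B D E. f \<in> hom C A B \<Longrightarrow> g \<in> hom C D E \<Longrightarrow>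
        mTenM C f g \<in> hom C (mTen C A D) (mTen C B E)"
    and ten_id: "\<And>A B. mTenM C (mId C A) (mId C B) = mId C (mTen C A B)"
    and ten_comp: "\<And>f f' g g' A B D E F G. f \<in> hom C A B \<Longrightarrow> f' \<in> hom C B D \<Longrightarrow>
        g \<in> hom C E F \<Longrightarrow> g' \<in> hom C F G \<Longrightarrow>
        mTenM C (mComp C f' f) (mComp C g' g) = mComp C (mTenM C f' g') (mTenM C f g)"
    and assoc_iso: "\<And>X Y Z. iso_arr C (mAssoc C X Y Z) (mTen C (mTen C X Y) Z) (mTen C X (mTen C Y Z))"
    and assoc_nat: "\<And>f g h X X' Y Y' Z Z'. f \<in> hom C X X' \<Longrightarrow> g \<in> hom C Y Y' \<Longrightarrow> h \<in> hom C Z Z' \<Longrightarrow>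
        mComp C (mAssoc C X' Y' Z') (mTenM C (mTenM C f g) h)
          = mComp C (mTenM C f (mTenM C g h)) (mAssoc C X Y Z)"
    and lunit_iso: "\<And>X. iso_arr C (mLunit C X) (mTen C (mUnit C) X) X"
    and lunit_nat: "\<And>f X Y. f \<in> hom C X Y \<Longrightarrow>
        mComp C (mLunit C Y) (mTenM C (mId C (mUnit C)) f) = mComp C f (mLunit C X)"
    and runit_iso: "\<And>X. iso_arr C (mRunit C X) (mTen C X (mUnit C)) X"
    and runit_nat: "\<And>f X Y. f \<in> hom C X Y \<Longrightarrow>
        mComp C (mRunit C Y) (mTenM C f (mId C (mUnit C))) = mComp C f (mRunit C X)"
    and triangle: "\<And>X Y. mComp C (mTenM C (mId C X) (mLunit C Y)) (mAssoc C X (mUnit C) Y)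
        = mTenM C (mRunit C X) (mId C Y)"
    and pentagon: "\<And>W X Y Z.
        mComp C (mAssoc C W X (mTen C Y Z)) (mAssoc C (mTen C W X) Y Z)
        = mComp C (mTenM C (mId C W) (mAssoc C X Y Z))
            (mComp C (mAssoc C W (mTen C X Y) Z) (mTenM C (mAssoc C W X Y) (mId C Z)))"
    and braid_hom: "\<And>X Y. mBraid C X Y \<in> hom C (mTen C X Y) (mTen C Y X)"
    and braid_nat: "\<And>f g X X' Y Y'. f \<in> hom C X X' \<Longrightarrow> g \<in> hom C Y Y' \<Longrightarrow>
        mComp C (mBraid C X' Y') (mTenM C f g) = mComp C (mTenM C g f) (mBraid C X Y)"
    and braid_sym: "\<And>X Y. mComp C (mBraid C Y X) (mBraid C X Y) = mId C (mTen C X Y)"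
    and hexagon: "\<And>X Y Z.
        mComp C (mAssoc C Y Z X) (mComp C (mBraid C X (mTen C Y Z)) (mAssoc C X Y Z))
        = mComp C (mTenM C (mId C Y) (mBraid C X Z))
            (mComp C (mAssoc C Y X Z) (mTenM C (mBraid C X Y) (mId C Z)))"
    and copy_hom: "\<And>X. mCopy C X \<in> hom C X (mTen C X X)"
    and del_hom: "\<And>X. mDel C X \<in> hom C X (mUnit C)"
    and counit_left: "\<And>X. mComp C (mLunit C X) (mComp C (mTenM C (mDel C X) (mId C X)) (mCopy C X)) = mId C X"
    and counit_right: "\<And>X. mComp C (mRunit C X) (mComp C (mTenM C (mId C X) (mDel C X)) (mCopy C X)) = mId C X"
    and coassoc: "\<And>X. mComp C (mAssoc C X X X) (mComp C (mTenM C (mCopy C X) (mId C X)) (mCopy C X))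
        = mComp C (mTenM C (mId C X) (mCopy C X)) (mCopy C X)"
    and cocomm: "\<And>X. mComp C (mBraid C X X) (mCopy C X) = mCopy C X"
    and copy_tensor: "\<And>X Y. mCopy C (mTen C X Y) = mComp C (mid4 C X X Y Y) (mTenM C (mCopy C X) (mCopy C Y))"
    and del_tensor: "\<And>X Y. mDel C (mTen C X Y) = mComp C (mLunit C (mUnit C)) (mTenM C (mDel C X) (mDel C Y))"
    and unit_terminal: "\<And>f A. f \<in> hom C A (mUnit C) \<Longrightarrow> f = mDel C A"

definition marg :: "('o, 'm) mcat \<Rightarrow> 'm \<Rightarrow> 'o \<Rightarrow> 'o \<Rightarrow> 'm" where
  "marg C f X Y = mComp C (mRunit C X) (mComp C (mTenM C (mId C X) (mDel C Y)) f)"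

definition conditional :: "('o, 'm) mcat \<Rightarrow> 'm \<Rightarrow> 'o \<Rightarrow> 'o \<Rightarrow> 'o \<Rightarrow> 'm \<Rightarrow> bool" where
  "conditional C f A X Y g \<longleftrightarrow> g \<in> hom C (mTen C X A) Y \<and>
     f = mComp C (mTenM C (mId C X) g)
           (mComp C (mAssoc C X X A)
             (mComp C (mTenM C (mCopy C X) (mId C A))
               (mComp C (mTenM C (marg C f X Y) (mId C A)) (mCopy C A))))"

definition has_conditionals :: "('o, 'm) mcat \<Rightarrow> bool" where
  "has_conditionals C \<longleftrightarrow>
     (\<forall>A X Y f. f \<in> hom C A (mTen C X Y) \<longrightarrow> (\<exists>g. conditional C f A X Y g))"

definition dilation :: "('o, 'm) mcat \<Rightarrow> 'm \<Rightarrow> 'o \<Rightarrow> 'o \<Rightarrow> 'o \<Rightarrow> 'm \<Rightarrow> bool" where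
  "dilation C p A X E \<pi> \<longleftrightarrow> \<pi> \<in> hom C A (mTen C X E) \<and>
     mComp C (mRunit C X) (mComp C (mTenM C (mId C X) (mDel C E)) \<pi>) = p"

definition dil_equal :: "('o, 'm) mcat \<Rightarrow> 'm \<Rightarrow> 'o \<Rightarrow> 'o \<Rightarrow> 'o \<Rightarrow> 'm \<Rightarrow> 'm \<Rightarrow> bool" where
  "dil_equal C \<pi> A X E f1 f2 \<longleftrightarrow>
     (\<forall>F \<rho>. dilation C \<pi> A (mTen C X E) F \<rho> \<longrightarrow>
        mComp C (mTenM C (mTenM C (mId C X) f1) (mId C F)) \<rho>
        = mComp C (mTenM C (mTenM C (mId C X) f2) (mId C F)) \<rho>)"

definition initial_dilation :: "('o, 'm) mcat \<Rightarrow> 'm \<Rightarrow> 'o \<Rightarrow> 'o \<Rightarrow> 'o \<Rightarrow> 'm \<Rightarrow> bool" where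
  "initial_dilation C p A X E \<pi> \<longleftrightarrow> dilation C p A X E \<pi> \<and>
     (\<forall>E' \<pi>'. dilation C p A X E' \<pi>' \<longrightarrow>
        (\<exists>f \<in> hom C E E'. mComp C (mTenM C (mId C X) f) \<pi> = \<pi>' \<and>
           (\<forall>g \<in> hom C E E'. mComp C (mTenM C (mId C X) g) \<pi> = \<pi>' \<longrightarrow>
              dil_equal C \<pi> A X E f g)))"

end

theory Submission
  imports Defs
begin

context markov_category begin

abbreviation ar :: "'m \<Rightarrow> bool" where "ar f \<equiv> f \<in> mArr C"
abbreviation dm :: "'m \<Rightarrow> 'o" where "dm f \<equiv> mDom C f"
abbreviation cd :: "'m \<Rightarrow> 'o" where "cd f \<equiv> mCod C f"
abbreviation cmp :: "'m \<Rightarrow> 'm \<Rightarrow> 'm" (infixr "\<cdot>" 55) where "g \<cdot> f \<equiv> mComp C g f"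
abbreviation tnm :: "'m \<Rightarrow> 'm \<Rightarrow> 'm" (infixr "\<otimes>" 60) where "f \<otimes> g \<equiv> mTenM C f g"
abbreviation tno :: "'o \<Rightarrow> 'o \<Rightarrow> 'o" (infixr "\<odot>" 65) where "X \<odot> Y \<equiv> mTen C X Y"
abbreviation idm :: "'o \<Rightarrow> 'm" where "idm X \<equiv> mId C X"
abbreviation as :: "'o \<Rightarrow> 'o \<Rightarrow> 'o \<Rightarrow> 'm" where "as X Y Z \<equiv> mAssoc C X Y Z"
abbreviation ai :: "'o \<Rightarrow> 'o \<Rightarrow> 'o \<Rightarrow> 'm" where "ai X Y Z \<equiv> inv_arr C (mAssoc C X Y Z)"
abbreviation br :: "'o \<Rightarrow> 'o \<Rightarrow> 'm" where "br X Y \<equiv> mBraid C X Y"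
abbreviation cpy :: "'o \<Rightarrow> 'm" where "cpy X \<equiv> mCopy C X"
abbreviation dl :: "'o \<Rightarrow> 'm" where "dl X \<equiv> mDel C X"
abbreviation ru :: "'o \<Rightarrow> 'm" where "ru X \<equiv> mRunit C X"
abbreviation lu :: "'o \<Rightarrow> 'm" where "lu X \<equiv> mLunit C X"
abbreviation un :: "'o" where "un \<equiv> mUnit C"

lemma hom_iff: "f \<in> hom C A B \<longleftrightarrow> ar f \<and> dm f = A \<and> cd f = B"
  by (simp add: hom_def)

lemma id_ar[simp]: "ar (idm X)" "dm (idm X) = X" "cd (idm X) = X"
  using id_hom[of X] by (auto simp: hom_iff)

lemma comp_ar[simp]: "ar f \<Longrightarrow> ar g \<Longrightarrow> dm g = cd f \<Longrightarrow> ar (g \<cdot> f)"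
  and comp_dm[simp]: "ar f \<Longrightarrow> ar g \<Longrightarrow> dm g = cd f \<Longrightarrow> dm (g \<cdot> f) = dm f"
  and comp_cd[simp]: "ar f \<Longrightarrow> ar g \<Longrightarrow> dm g = cd f \<Longrightarrow> cd (g \<cdot> f) = cd g"
  using comp_hom[of f "dm f" "cd f" g "cd g"] by (auto simp: hom_iff)

lemma ten_ar[simp]: "ar f \<Longrightarrow> ar g \<Longrightarrow> ar (f \<otimes> g)"
  and ten_dm[simp]: "ar f \<Longrightarrow> ar g \<Longrightarrow> dm (f \<otimes> g) = dm f \<odot> dm g"
  and ten_cd[simp]: "ar f \<Longrightarrow> ar g \<Longrightarrow> cd (f \<otimes> g) = cd f \<odot> cd g"
  using ten_hom[of f "dm f" "cd f" g "dm g" "cd g"] by (auto simp: hom_iff)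

lemma iso_inv:
  assumes "iso_arr C f A B"
  shows "inv_arr C f \<in> hom C B A" "inv_arr C f \<cdot> f = idm A" "f \<cdot> inv_arr C f = idm B"
proof -
  have f: "f \<in> hom C A B" using assms unfolding iso_arr_def by blast
  obtain g where g: "g \<in> hom C B A" "g \<cdot> f = idm A" "f \<cdot> g = idm B"
    using assms unfolding iso_arr_def by blast
  have dmf: "dm f = A" "cd f = B" using f unfolding hom_iff by blast+
  have uniq: "h = g" if h: "h \<in> hom C B A" "h \<cdot> f = idm A" "f \<cdot> h = idm B" for h
  proof -
    have "h = h \<cdot> idm B" using comp_id_right[OF h(1)] by simp
    also have "\<dots> = h \<cdot> (f \<cdot> g)" using g(3) by simp
    also have "\<dots> = (h \<cdot> f) \<cdot> g" using comp_assoc[OF g(1) f h(1)] by simp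
    also have "\<dots> = g" using h(2) comp_id_left[OF g(1)] by simp
    finally show "h = g" .
  qed
  have "inv_arr C f = g"
    unfolding inv_arr_def dmf
  proof (rule the_equality)
    show "g \<in> hom C B A \<and> g \<cdot> f = idm A \<and> f \<cdot> g = idm B" using g by blast
    show "\<And>h. h \<in> hom C B A \<and> h \<cdot> f = idm A \<and> f \<cdot> h = idm B \<Longrightarrow> h = g"
      using uniq by blast
  qed
  then show "inv_arr C f \<in> hom C B A" "inv_arr C f \<cdot> f = idm A" "f \<cdot> inv_arr C f = idm B"
    using g by simp_all
qed

lemma as_ar[simp]: "ar (as X Y Z)" "dm (as X Y Z) = (X \<odot> Y) \<odot> Z" "cd (as X Y Z) = X \<odot> (Y \<odot> Z)"
  using assoc_iso[of X Y Z] by (auto simp: iso_arr_def hom_iff)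
lemma ai_ar[simp]: "ar (ai X Y Z)" "dm (ai X Y Z) = X \<odot> (Y \<odot> Z)" "cd (ai X Y Z) = (X \<odot> Y) \<odot> Z"
  using iso_inv(1)[OF assoc_iso[of X Y Z]] by (auto simp: hom_iff)
lemma ai_as: "ai X Y Z \<cdot> as X Y Z = idm ((X \<odot> Y) \<odot> Z)"
  using iso_inv(2)[OF assoc_iso[of X Y Z]] .
lemma as_ai: "as X Y Z \<cdot> ai X Y Z = idm (X \<odot> (Y \<odot> Z))"
  using iso_inv(3)[OF assoc_iso[of X Y Z]] .
lemma lu_ar[simp]: "ar (lu X)" "dm (lu X) = un \<odot> X" "cd (lu X) = X"
  using lunit_iso[of X] by (auto simp: iso_arr_def hom_iff)
lemma ru_ar[simp]: "ar (ru X)" "dm (ru X) = X \<odot> un" "cd (ru X) = X"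
  using runit_iso[of X] by (auto simp: iso_arr_def hom_iff)
lemma br_ar[simp]: "ar (br X Y)" "dm (br X Y) = X \<odot> Y" "cd (br X Y) = Y \<odot> X"
  using braid_hom[of X Y] by (auto simp: hom_iff)
lemma cpy_ar[simp]: "ar (cpy X)" "dm (cpy X) = X" "cd (cpy X) = X \<odot> X"
  using copy_hom[of X] by (auto simp: hom_iff)
lemma dl_ar[simp]: "ar (dl X)" "dm (dl X) = X" "cd (dl X) = un"
  using del_hom[of X] by (auto simp: hom_iff)

lemma assoc_r[simp]: "ar f \<Longrightarrow> ar g \<Longrightarrow> ar h \<Longrightarrow> dm g = cd f \<Longrightarrow> dm h = cd g \<Longrightarrow> (h \<cdot> g) \<cdot> f = h \<cdot> (g \<cdot> f)"
  using comp_assoc[of f "dm f" "cd f" g "cd g" h "cd h"] by (simp add: hom_iff)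

lemma idr[simp]: "ar f \<Longrightarrow> dm f = X \<Longrightarrow> f \<cdot> idm X = f"
  using comp_id_right[of f "dm f" "cd f"] by (simp add: hom_iff)
lemma idl[simp]: "ar f \<Longrightarrow> cd f = X \<Longrightarrow> idm X \<cdot> f = f"
  using comp_id_left[of f "dm f" "cd f"] by (simp add: hom_iff)

declare ten_id[simp]

lemma inter: "ar f \<Longrightarrow> ar f' \<Longrightarrow> ar g \<Longrightarrow> ar g' \<Longrightarrow> dm f' = cd f \<Longrightarrow> dm g' = cd g \<Longrightarrow>
   (f' \<otimes> g') \<cdot> (f \<otimes> g) = (f' \<cdot> f) \<otimes> (g' \<cdot> g)"
  using ten_comp[of f "dm f" "cd f" f' "cd f'" g "dm g" "cd g" g' "cd g'"] by (simp add: hom_iff)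

lemma inter_k: "ar f \<Longrightarrow> ar f' \<Longrightarrow> ar g \<Longrightarrow> ar g' \<Longrightarrow> dm f' = cd f \<Longrightarrow> dm g' = cd g \<Longrightarrow> ar k \<Longrightarrow> cd k = dm f \<odot> dm g \<Longrightarrow>
   (f' \<otimes> g') \<cdot> ((f \<otimes> g) \<cdot> k) = ((f' \<cdot> f) \<otimes> (g' \<cdot> g)) \<cdot> k"
  by (simp add: inter[symmetric])


lemma dl_term: "ar f \<Longrightarrow> cd f = un \<Longrightarrow> f = dl (dm f)"
  by (rule unit_terminal) (simp add: hom_iff)

lemma dl_comp[simp]: "ar f \<Longrightarrow> cd f = Y \<Longrightarrow> dl Y \<cdot> f = dl (dm f)"
proof -
  assume a: "ar f" "cd f = Y"
  have "dl Y \<cdot> f \<in> hom C (dm f) un" using a by (simp add: hom_iff)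
  from unit_terminal[OF this] show ?thesis .
qed

lemma ru_nat: "ar f \<Longrightarrow> ru (cd f) \<cdot> (f \<otimes> idm un) = f \<cdot> ru (dm f)"
  using runit_nat[of f "dm f" "cd f"] by (simp add: hom_iff)

lemma as_nat: "ar f \<Longrightarrow> ar g \<Longrightarrow> ar h \<Longrightarrow>
   as (cd f) (cd g) (cd h) \<cdot> ((f \<otimes> g) \<otimes> h) = (f \<otimes> (g \<otimes> h)) \<cdot> as (dm f) (dm g) (dm h)"
  using assoc_nat[of f "dm f" "cd f" g "dm g" "cd g" h "dm h" "cd h"] by (simp add: hom_iff)

lemma ai_nat: "ar f \<Longrightarrow> ar g \<Longrightarrow> ar h \<Longrightarrow>
   ai (cd f) (cd g) (cd h) \<cdot> (f \<otimes> (g \<otimes> h)) = ((f \<otimes> g) \<otimes> h) \<cdot> ai (dm f) (dm g) (dm h)"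
proof -
  assume a: "ar f" "ar g" "ar h"
  have "ai (cd f) (cd g) (cd h) \<cdot> (f \<otimes> (g \<otimes> h)) = ai (cd f) (cd g) (cd h) \<cdot> ((f \<otimes> (g \<otimes> h)) \<cdot> (as (dm f) (dm g) (dm h) \<cdot> ai (dm f) (dm g) (dm h)))"
    using a by (simp add: as_ai)
  also have "\<dots> = ai (cd f) (cd g) (cd h) \<cdot> ((as (cd f) (cd g) (cd h) \<cdot> ((f \<otimes> g) \<otimes> h)) \<cdot> ai (dm f) (dm g) (dm h))"
    using a by (simp add: as_nat)
  also have "\<dots> = ((f \<otimes> g) \<otimes> h) \<cdot> ai (dm f) (dm g) (dm h)"
    using a by (simp add: ai_as flip: assoc_r)
  finally show ?thesis .
qed

lemma br_nat: "ar f \<Longrightarrow> ar g \<Longrightarrow> br (cd f) (cd g) \<cdot> (f \<otimes> g) = (g \<otimes> f) \<cdot> br (dm f) (dm g)"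
  using braid_nat[of f "dm f" "cd f" g "dm g" "cd g"] by (simp add: hom_iff)


lemmas mrg = inter inter_k

lemma counit_r: "ru X \<cdot> ((idm X \<otimes> dl X) \<cdot> cpy X) = idm X"
  using counit_right by simp
lemma counit_r_k: "ar k \<Longrightarrow> cd k = X \<Longrightarrow> ru X \<cdot> ((idm X \<otimes> dl X) \<cdot> (cpy X \<cdot> k)) = k"
  using counit_right by (simp flip: assoc_r)

lemma RU_k: "ar u \<Longrightarrow> ar v \<Longrightarrow> cd v = un \<Longrightarrow> ar k \<Longrightarrow> cd k = dm u \<odot> dm v \<Longrightarrow>
  ru (cd u) \<cdot> ((u \<otimes> v) \<cdot> k) = u \<cdot> (ru (dm u) \<cdot> ((idm (dm u) \<otimes> v) \<cdot> k))"
proof -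
  assume a: "ar u" "ar v" "cd v = un" "ar k" "cd k = dm u \<odot> dm v"
  have "u \<otimes> v = (u \<otimes> idm un) \<cdot> (idm (dm u) \<otimes> v)" using a by (simp add: mrg)
  then have "ru (cd u) \<cdot> ((u \<otimes> v) \<cdot> k) = (ru (cd u) \<cdot> (u \<otimes> idm un)) \<cdot> ((idm (dm u) \<otimes> v) \<cdot> k)"
    using a by simp
  also have "\<dots> = (u \<cdot> ru (dm u)) \<cdot> ((idm (dm u) \<otimes> v) \<cdot> k)" using ru_nat a by simp
  finally show ?thesis using a by simp
qed


lemma triangle_k: "ar k \<Longrightarrow> cd k = (X \<odot> un) \<odot> Y \<Longrightarrow>
  (idm X \<otimes> lu Y) \<cdot> (as X un Y \<cdot> k) = (ru X \<otimes> idm Y) \<cdot> k"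
  using triangle[of X Y] by (simp flip: assoc_r)

lemma MA_k:
  assumes "ar k" "cd k = (X \<odot> Y) \<odot> Z"
  shows "ru X \<cdot> ((idm X \<otimes> dl (Y \<odot> Z)) \<cdot> (as X Y Z \<cdot> k)) =
    ru X \<cdot> ((idm X \<otimes> dl Y) \<cdot> (ru (X \<odot> Y) \<cdot> ((idm (X \<odot> Y) \<otimes> dl Z) \<cdot> k)))"
proof -
  have e1: "(idm X \<otimes> lu un) \<cdot> ((idm X \<otimes> (dl Y \<otimes> dl Z)) \<cdot> (as X Y Z \<cdot> k)) = (idm X \<otimes> dl (Y \<odot> Z)) \<cdot> (as X Y Z \<cdot> k)"
    using assms by (simp add: mrg del_tensor)
  have e2: "(idm X \<otimes> (dl Y \<otimes> dl Z)) \<cdot> (as X Y Z \<cdot> k) = as X un un \<cdot> (((idm X \<otimes> dl Y) \<otimes> dl Z) \<cdot> k)"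
    using as_nat[of "idm X" "dl Y" "dl Z"] assms by (simp flip: assoc_r)
  have e3: "ru X \<cdot> ((ru X \<otimes> idm un) \<cdot> (((idm X \<otimes> dl Y) \<otimes> dl Z) \<cdot> k)) = ru X \<cdot> (((ru X \<cdot> (idm X \<otimes> dl Y)) \<otimes> dl Z) \<cdot> k)"
    using assms by (simp add: mrg)
  have e4: "ru X \<cdot> (((ru X \<cdot> (idm X \<otimes> dl Y)) \<otimes> dl Z) \<cdot> k) = (ru X \<cdot> (idm X \<otimes> dl Y)) \<cdot> (ru (X \<odot> Y) \<cdot> ((idm (X \<odot> Y) \<otimes> dl Z) \<cdot> k))"
    using RU_k[of "ru X \<cdot> (idm X \<otimes> dl Y)" "dl Z" k] assms by simp
  show ?thesis
    using assms by (simp add: e1[symmetric] e2 triangle_k e3 e4)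
qed


lemma M1_k:
  assumes "ar u" "ar v" "ar k" "cd k = dm u \<odot> dm v" "cd u = Y" "cd v = Z"
  shows "ru Y \<cdot> ((idm Y \<otimes> dl Z) \<cdot> ((u \<otimes> v) \<cdot> k)) = u \<cdot> (ru (dm u) \<cdot> ((idm (dm u) \<otimes> dl (dm v)) \<cdot> k))"
proof -
  have "(idm (cd u) \<otimes> dl (cd v)) \<cdot> ((u \<otimes> v) \<cdot> k) = (u \<otimes> dl (dm v)) \<cdot> k"
    using assms by (simp add: mrg)
  moreover have "ru (cd u) \<cdot> ((u \<otimes> dl (dm v)) \<cdot> k) = u \<cdot> (ru (dm u) \<cdot> ((idm (dm u) \<otimes> dl (dm v)) \<cdot> k))"
    using RU_k[of u "dl (dm v)" k] assms by simp
  ultimately show ?thesis using assms by simp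
qed

abbreviation pz :: "'o \<Rightarrow> 'o \<Rightarrow> 'm \<Rightarrow> 'm" where
  "pz X A p \<equiv> as X X A \<cdot> ((cpy X \<otimes> idm A) \<cdot> ((p \<otimes> idm A) \<cdot> cpy A))"

lemma pz_ar: "ar p \<Longrightarrow> dm p = A \<Longrightarrow> cd p = X \<Longrightarrow> ar (pz X A p) \<and> dm (pz X A p) = A \<and> cd (pz X A p) = X \<odot> (X \<odot> A)"
  by simp

lemma pz_dil:
  assumes "ar p" "dm p = A" "cd p = X"
  shows "ru X \<cdot> ((idm X \<otimes> dl (X \<odot> A)) \<cdot> pz X A p) = p"
  using assms by (simp add: MA_k M1_k counit_r counit_r_k)


abbreviation ri :: "'o \<Rightarrow> 'm" where "ri X \<equiv> inv_arr C (mRunit C X)"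
lemma ri_ar[simp]: "ar (ri X)" "dm (ri X) = X" "cd (ri X) = X \<odot> un"
  using iso_inv(1)[OF runit_iso[of X]] by (auto simp: hom_iff)
lemma ri_ru: "ri X \<cdot> ru X = idm (X \<odot> un)"
  using iso_inv(2)[OF runit_iso[of X]] .
lemma ru_ri: "ru X \<cdot> ri X = idm X"
  using iso_inv(3)[OF runit_iso[of X]] .

lemma cancel_ru:
  assumes "ar f" "ar g" "dm f = W" "dm g = W" "cd f = V" "cd g = V" "f \<otimes> idm un = g \<otimes> idm un"
  shows "f = g"
proof -
  have "f \<cdot> ru W = g \<cdot> ru W"
    using ru_nat[of f] ru_nat[of g] assms by simp
  then have "(f \<cdot> ru W) \<cdot> ri W = (g \<cdot> ru W) \<cdot> ri W" by simp
  then show ?thesis using assms by (simp add: ru_ri)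
qed

lemma cancel_as:
  assumes "ar f" "ar g" "cd f = (X \<odot> Y) \<odot> Z" "cd g = (X \<odot> Y) \<odot> Z" "as X Y Z \<cdot> f = as X Y Z \<cdot> g"
  shows "f = g"
proof -
  from assms(5) have "ai X Y Z \<cdot> (as X Y Z \<cdot> f) = ai X Y Z \<cdot> (as X Y Z \<cdot> g)" by (rule arg_cong)
  then show ?thesis using assms(1-4) by (simp add: ai_as flip: assoc_r)
qed

lemma kelly: "(idm X \<otimes> ru Y) \<cdot> as X Y un = ru (X \<odot> Y)"
proof -
  let ?T = "idm X \<otimes> (idm Y \<otimes> lu un)"
  have P: "as X Y (un \<odot> un) \<cdot> as (X \<odot> Y) un un = (idm X \<otimes> as Y un un) \<cdot> (as X (Y \<odot> un) un \<cdot> (as X Y un \<otimes> idm un))"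
    using pentagon[of X Y un un] by simp
  have L1: "?T \<cdot> (as X Y (un \<odot> un) \<cdot> as (X \<odot> Y) un un) = as X Y un \<cdot> (ru (X \<odot> Y) \<otimes> idm un)"
  proof -
    have "?T \<cdot> (as X Y (un \<odot> un) \<cdot> as (X \<odot> Y) un un) = as X Y un \<cdot> ((idm (X \<odot> Y) \<otimes> lu un) \<cdot> as (X \<odot> Y) un un)"
      using as_nat[of "idm X" "idm Y" "lu un"] by (simp flip: assoc_r)
    then show ?thesis using triangle[of "X \<odot> Y" un] by simp
  qed
  have R1: "?T \<cdot> ((idm X \<otimes> as Y un un) \<cdot> (as X (Y \<odot> un) un \<cdot> (as X Y un \<otimes> idm un))) = as X Y un \<cdot> (((idm X \<otimes> ru Y) \<cdot> as X Y un) \<otimes> idm un)"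
  proof -
    have a1: "?T \<cdot> ((idm X \<otimes> as Y un un) \<cdot> k) = (idm X \<otimes> (ru Y \<otimes> idm un)) \<cdot> k" if "ar k" "cd k = X \<odot> ((Y \<odot> un) \<odot> un)" for k
      using that triangle[of Y un] by (simp add: mrg)
    have a2: "(idm X \<otimes> (ru Y \<otimes> idm un)) \<cdot> (as X (Y \<odot> un) un \<cdot> k) = as X Y un \<cdot> (((idm X \<otimes> ru Y) \<otimes> idm un) \<cdot> k)" if "ar k" "cd k = (X \<odot> (Y \<odot> un)) \<odot> un" for k
      using that as_nat[of "idm X" "ru Y" "idm un"] by (simp flip: assoc_r)
    have a3: "((idm X \<otimes> ru Y) \<otimes> idm un) \<cdot> (as X Y un \<otimes> idm un) = ((idm X \<otimes> ru Y) \<cdot> as X Y un) \<otimes> idm un"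
      by (simp add: mrg)
    show ?thesis by (simp add: a1 a2 a3)
  qed
  have "as X Y un \<cdot> (ru (X \<odot> Y) \<otimes> idm un) = ?T \<cdot> (as X Y (un \<odot> un) \<cdot> as (X \<odot> Y) un un)"
    by (rule L1[symmetric])
  also have "\<dots> = ?T \<cdot> ((idm X \<otimes> as Y un un) \<cdot> (as X (Y \<odot> un) un \<cdot> (as X Y un \<otimes> idm un)))"
    by (subst P) (rule refl)
  also have "\<dots> = as X Y un \<cdot> (((idm X \<otimes> ru Y) \<cdot> as X Y un) \<otimes> idm un)"
    by (rule R1)
  finally have e: "as X Y un \<cdot> (ru (X \<odot> Y) \<otimes> idm un) = as X Y un \<cdot> (((idm X \<otimes> ru Y) \<cdot> as X Y un) \<otimes> idm un)" .
  have e2: "ru (X \<odot> Y) \<otimes> idm un = ((idm X \<otimes> ru Y) \<cdot> as X Y un) \<otimes> idm un"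
    by (rule cancel_as[OF _ _ _ _ e]) simp_all
  have "ru (X \<odot> Y) = (idm X \<otimes> ru Y) \<cdot> as X Y un"
    by (rule cancel_ru[OF _ _ _ _ _ _ e2]) simp_all
  then show ?thesis by simp
qed


lemma ai_as_k[simp]: "ar k \<Longrightarrow> cd k = (X \<odot> Y) \<odot> Z \<Longrightarrow> ai X Y Z \<cdot> (as X Y Z \<cdot> k) = k"
  by (simp add: ai_as flip: assoc_r)
lemma as_ai_k[simp]: "ar k \<Longrightarrow> cd k = X \<odot> (Y \<odot> Z) \<Longrightarrow> as X Y Z \<cdot> (ai X Y Z \<cdot> k) = k"
  by (simp add: as_ai flip: assoc_r)
declare ai_as[simp] as_ai[simp]

lemma pentagon_k: "ar k \<Longrightarrow> cd k = ((W \<odot> X) \<odot> Y) \<odot> Z \<Longrightarrow>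
  as W X (Y \<odot> Z) \<cdot> (as (W \<odot> X) Y Z \<cdot> k) = (idm W \<otimes> as X Y Z) \<cdot> (as W (X \<odot> Y) Z \<cdot> ((as W X Y \<otimes> idm Z) \<cdot> k))"
  using pentagon[of W X Y Z] by (simp flip: assoc_r)

lemma as_nat_k: "ar f \<Longrightarrow> ar g \<Longrightarrow> ar h \<Longrightarrow> ar k \<Longrightarrow> cd k = (dm f \<odot> dm g) \<odot> dm h \<Longrightarrow>
   as (cd f) (cd g) (cd h) \<cdot> (((f \<otimes> g) \<otimes> h) \<cdot> k) = (f \<otimes> (g \<otimes> h)) \<cdot> (as (dm f) (dm g) (dm h) \<cdot> k)"
  using as_nat[of f g h] by (simp flip: assoc_r)

lemma ai_nat_k: "ar f \<Longrightarrow> ar g \<Longrightarrow> ar h \<Longrightarrow> ar k \<Longrightarrow> cd k = dm f \<odot> (dm g \<odot> dm h) \<Longrightarrow>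
   ai (cd f) (cd g) (cd h) \<cdot> ((f \<otimes> (g \<otimes> h)) \<cdot> k) = ((f \<otimes> g) \<otimes> h) \<cdot> (ai (dm f) (dm g) (dm h) \<cdot> k)"
  using ai_nat[of f g h] by (simp flip: assoc_r)

lemma hexagon_k: "ar k \<Longrightarrow> cd k = (X \<odot> Y) \<odot> Z \<Longrightarrow>
  as Y Z X \<cdot> (br X (Y \<odot> Z) \<cdot> (as X Y Z \<cdot> k)) = (idm Y \<otimes> br X Z) \<cdot> (as Y X Z \<cdot> ((br X Y \<otimes> idm Z) \<cdot> k))"
  using hexagon[where X=X and Y=Y and Z=Z] by (simp flip: assoc_r)

lemma coassoc_k: "ar k \<Longrightarrow> cd k = X \<Longrightarrow>
  as X X X \<cdot> ((cpy X \<otimes> idm X) \<cdot> (cpy X \<cdot> k)) = (idm X \<otimes> cpy X) \<cdot> (cpy X \<cdot> k)"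
  using coassoc[of X] by (simp flip: assoc_r)

lemma cocomm_k: "ar k \<Longrightarrow> cd k = X \<Longrightarrow> br X X \<cdot> (cpy X \<cdot> k) = cpy X \<cdot> k"
  using cocomm[of X] by (simp flip: assoc_r)

lemma mid4_alt:
  "mid4 C U V A B = as (U \<odot> A) V B \<cdot> ((ai U A V \<otimes> idm B) \<cdot> (((idm U \<otimes> br V A) \<otimes> idm B) \<cdot> ((as U V A \<otimes> idm B) \<cdot> ai (U \<odot> V) A B)))"
proof -
  have s1: "as (U \<odot> A) V B \<cdot> ((ai U A V \<otimes> idm B) \<cdot> k) = ai U A (V \<odot> B) \<cdot> ((idm U \<otimes> as A V B) \<cdot> (as U (A \<odot> V) B \<cdot> k))"
    if "ar k" "cd k = (U \<odot> (A \<odot> V)) \<odot> B" for k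
  proof -
    have i: "(as U A V \<otimes> idm B) \<cdot> ((ai U A V \<otimes> idm B) \<cdot> k) = k" using that by (simp add: mrg)
    have "ai U A (V \<odot> B) \<cdot> ((idm U \<otimes> as A V B) \<cdot> (as U (A \<odot> V) B \<cdot> k))
       = ai U A (V \<odot> B) \<cdot> ((idm U \<otimes> as A V B) \<cdot> (as U (A \<odot> V) B \<cdot> ((as U A V \<otimes> idm B) \<cdot> ((ai U A V \<otimes> idm B) \<cdot> k))))"
      using that i by simp
    also have "\<dots> = ai U A (V \<odot> B) \<cdot> (as U A (V \<odot> B) \<cdot> (as (U \<odot> A) V B \<cdot> ((ai U A V \<otimes> idm B) \<cdot> k)))"
      using that by (simp add: pentagon_k)
    also have "\<dots> = as (U \<odot> A) V B \<cdot> ((ai U A V \<otimes> idm B) \<cdot> k)"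
      using that by simp
    finally show ?thesis by simp
  qed
  have s2: "as U (A \<odot> V) B \<cdot> (((idm U \<otimes> br V A) \<otimes> idm B) \<cdot> k) = (idm U \<otimes> (br V A \<otimes> idm B)) \<cdot> (as U (V \<odot> A) B \<cdot> k)"
    if "ar k" "cd k = (U \<odot> (V \<odot> A)) \<odot> B" for k
    using that as_nat_k[of "idm U" "br V A" "idm B" k] by simp
  have s3': "as U (V \<odot> A) B \<cdot> ((as U V A \<otimes> idm B) \<cdot> k) = (idm U \<otimes> ai V A B) \<cdot> (as U V (A \<odot> B) \<cdot> (as (U \<odot> V) A B \<cdot> k))"
    if "ar k" "cd k = ((U \<odot> V) \<odot> A) \<odot> B" for k
  proof -
    have i: "(idm U \<otimes> ai V A B) \<cdot> ((idm U \<otimes> as V A B) \<cdot> k) = k" if "ar k" "cd k = U \<odot> ((V \<odot> A) \<odot> B)" for k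
      using that by (simp add: mrg)
    have "(idm U \<otimes> ai V A B) \<cdot> (as U V (A \<odot> B) \<cdot> (as (U \<odot> V) A B \<cdot> k)) =
      (idm U \<otimes> ai V A B) \<cdot> ((idm U \<otimes> as V A B) \<cdot> (as U (V \<odot> A) B \<cdot> ((as U V A \<otimes> idm B) \<cdot> k)))"
      using that by (simp add: pentagon_k)
    also have "\<dots> = as U (V \<odot> A) B \<cdot> ((as U V A \<otimes> idm B) \<cdot> k)"
      using that by (simp add: i)
    finally show ?thesis by simp
  qed
  have s3: "as U (V \<odot> A) B \<cdot> ((as U V A \<otimes> idm B) \<cdot> ai (U \<odot> V) A B) = (idm U \<otimes> ai V A B) \<cdot> as U V (A \<odot> B)"
    using s3'[of "ai (U \<odot> V) A B"] by simp
  have m: "(idm U \<otimes> as A V B) \<cdot> ((idm U \<otimes> (br V A \<otimes> idm B)) \<cdot> ((idm U \<otimes> ai V A B) \<cdot> k)) =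
           (idm U \<otimes> (as A V B \<cdot> ((br V A \<otimes> idm B) \<cdot> ai V A B))) \<cdot> k" if "ar k" "cd k = U \<odot> (V \<odot> (A \<odot> B))" for k
    using that by (simp add: mrg)
  show ?thesis unfolding mid4_def
    by (simp add: s1 s2 s3 m)
qed




abbreviation Pp :: "'o \<Rightarrow> 'o \<Rightarrow> 'm" where
  "Pp X A \<equiv> ai X A X \<cdot> ((idm X \<otimes> br X A) \<cdot> (as X X A \<cdot> (cpy X \<otimes> idm A)))"

lemma C2: "cpy (X \<odot> A) = as (X \<odot> A) X A \<cdot> ((Pp X A \<otimes> idm A) \<cdot> (ai X A A \<cdot> (idm X \<otimes> cpy A)))"
proof -
  have a: "ai (X \<odot> X) A A \<cdot> (cpy X \<otimes> cpy A) = ((cpy X \<otimes> idm A) \<otimes> idm A) \<cdot> (ai X A A \<cdot> (idm X \<otimes> cpy A))"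
  proof -
    have "cpy X \<otimes> cpy A = (cpy X \<otimes> idm (A \<odot> A)) \<cdot> (idm X \<otimes> cpy A)" by (simp add: mrg)
    then have "ai (X \<odot> X) A A \<cdot> (cpy X \<otimes> cpy A) = ai (X \<odot> X) A A \<cdot> ((cpy X \<otimes> idm (A \<odot> A)) \<cdot> (idm X \<otimes> cpy A))" by simp
    also have "\<dots> = ((cpy X \<otimes> idm A) \<otimes> idm A) \<cdot> (ai X A A \<cdot> (idm X \<otimes> cpy A))"
      using ai_nat_k[of "cpy X" "idm A" "idm A" "idm X \<otimes> cpy A"] by simp
    finally show ?thesis .
  qed
  have b: "(ai X A X \<otimes> idm A) \<cdot> (((idm X \<otimes> br X A) \<otimes> idm A) \<cdot> ((as X X A \<otimes> idm A) \<cdot> (((cpy X \<otimes> idm A) \<otimes> idm A) \<cdot> k)))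
     = (Pp X A \<otimes> idm A) \<cdot> k" if "ar k" "cd k = (X \<odot> A) \<odot> A" for k
    using that by (simp add: mrg)
  have "cpy (X \<odot> A) = mid4 C X X A A \<cdot> (cpy X \<otimes> cpy A)" by (rule copy_tensor)
  also have "\<dots> = as (X \<odot> A) X A \<cdot> ((Pp X A \<otimes> idm A) \<cdot> (ai X A A \<cdot> (idm X \<otimes> cpy A)))"
    by (simp add: mid4_alt a b)
  finally show ?thesis .
qed

lemma lemP: "(idm X \<otimes> br X (X \<odot> A)) \<cdot> (as X X (X \<odot> A) \<cdot> ((cpy X \<otimes> idm (X \<odot> A)) \<cdot> (as X X A \<cdot> (cpy X \<otimes> idm A))))
  = (idm X \<otimes> Pp X A) \<cdot> (as X X A \<cdot> (cpy X \<otimes> idm A))"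
proof -
  have p1: "(cpy X \<otimes> idm (X \<odot> A)) \<cdot> (as X X A \<cdot> k) = as (X \<odot> X) X A \<cdot> (((cpy X \<otimes> idm X) \<otimes> idm A) \<cdot> k)"
    if "ar k" "cd k = (X \<odot> X) \<odot> A" for k
    using that as_nat_k[of "cpy X" "idm X" "idm A" k] by simp
  have p3: "(as X X X \<otimes> idm A) \<cdot> (((cpy X \<otimes> idm X) \<otimes> idm A) \<cdot> (cpy X \<otimes> idm A)) = ((idm X \<otimes> cpy X) \<otimes> idm A) \<cdot> (cpy X \<otimes> idm A)"
    by (simp add: mrg coassoc)
  have p4: "as X (X \<odot> X) A \<cdot> (((idm X \<otimes> cpy X) \<otimes> idm A) \<cdot> k) = (idm X \<otimes> (cpy X \<otimes> idm A)) \<cdot> (as X X A \<cdot> k)"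
    if "ar k" "cd k = (X \<odot> X) \<odot> A" for k
    using that as_nat_k[of "idm X" "cpy X" "idm A" k] by simp
  have p5: "br X (X \<odot> A) \<cdot> (as X X A \<cdot> (cpy X \<otimes> idm A)) = Pp X A"
  proof -
    have h: "(br X X \<otimes> idm A) \<cdot> (cpy X \<otimes> idm A) = cpy X \<otimes> idm A" by (simp add: mrg cocomm)
    have "br X (X \<odot> A) \<cdot> (as X X A \<cdot> (cpy X \<otimes> idm A)) = ai X A X \<cdot> (as X A X \<cdot> (br X (X \<odot> A) \<cdot> (as X X A \<cdot> (cpy X \<otimes> idm A))))"
      by simp
    also have "\<dots> = ai X A X \<cdot> ((idm X \<otimes> br X A) \<cdot> (as X X A \<cdot> ((br X X \<otimes> idm A) \<cdot> (cpy X \<otimes> idm A))))"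
      by (simp add: hexagon_k)
    also have "\<dots> = Pp X A" by (simp add: h)
    finally show ?thesis .
  qed
  have m: "(idm X \<otimes> br X (X \<odot> A)) \<cdot> ((idm X \<otimes> as X X A) \<cdot> ((idm X \<otimes> (cpy X \<otimes> idm A)) \<cdot> k)) =
     (idm X \<otimes> (br X (X \<odot> A) \<cdot> (as X X A \<cdot> (cpy X \<otimes> idm A)))) \<cdot> k" if "ar k" "cd k = X \<odot> X \<odot> A" for k
    using that by (simp add: mrg)
  have "(idm X \<otimes> br X (X \<odot> A)) \<cdot> (as X X (X \<odot> A) \<cdot> ((cpy X \<otimes> idm (X \<odot> A)) \<cdot> (as X X A \<cdot> (cpy X \<otimes> idm A))))
     = (idm X \<otimes> br X (X \<odot> A)) \<cdot> (as X X (X \<odot> A) \<cdot> (as (X \<odot> X) X A \<cdot> (((cpy X \<otimes> idm X) \<otimes> idm A) \<cdot> (cpy X \<otimes> idm A))))"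
    by (simp add: p1)
  also have "\<dots> = (idm X \<otimes> br X (X \<odot> A)) \<cdot> ((idm X \<otimes> as X X A) \<cdot> (as X (X \<odot> X) A \<cdot> ((as X X X \<otimes> idm A) \<cdot> (((cpy X \<otimes> idm X) \<otimes> idm A) \<cdot> (cpy X \<otimes> idm A)))))"
    by (simp add: pentagon_k)
  also have "\<dots> = (idm X \<otimes> br X (X \<odot> A)) \<cdot> ((idm X \<otimes> as X X A) \<cdot> (as X (X \<odot> X) A \<cdot> (((idm X \<otimes> cpy X) \<otimes> idm A) \<cdot> (cpy X \<otimes> idm A))))"
    by (simp only: p3)
  also have "\<dots> = (idm X \<otimes> br X (X \<odot> A)) \<cdot> ((idm X \<otimes> as X X A) \<cdot> ((idm X \<otimes> (cpy X \<otimes> idm A)) \<cdot> (as X X A \<cdot> (cpy X \<otimes> idm A))))"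
    by (simp add: p4)
  also have "\<dots> = (idm X \<otimes> Pp X A) \<cdot> (as X X A \<cdot> (cpy X \<otimes> idm A))"
    by (simp add: m p5)
  finally show ?thesis .
qed


abbreviation RR :: "'o \<Rightarrow> 'o \<Rightarrow> 'o \<Rightarrow> 'm" where
  "RR X A Y \<equiv> (idm X \<otimes> as Y X A) \<cdot> (as X (Y \<odot> X) A \<cdot> (((idm X \<otimes> br X Y) \<otimes> idm A) \<cdot>
      ((as X X Y \<otimes> idm A) \<cdot> ((cpy X \<otimes> idm Y) \<otimes> idm A))))"

lemma RR_nat:
  assumes u: "ar u" "dm u = Y" "cd u = Y'" and k: "ar k" "cd k = (X \<odot> Y) \<odot> A"
  shows "RR X A Y' \<cdot> (((idm X \<otimes> u) \<otimes> idm A) \<cdot> k) = (idm X \<otimes> (u \<otimes> idm (X \<odot> A))) \<cdot> (RR X A Y \<cdot> k)"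
proof -
  have n1: "((cpy X \<otimes> idm Y') \<otimes> idm A) \<cdot> (((idm X \<otimes> u) \<otimes> idm A) \<cdot> k) = ((idm (X \<odot> X) \<otimes> u) \<otimes> idm A) \<cdot> (((cpy X \<otimes> idm Y) \<otimes> idm A) \<cdot> k)"
    using u k by (simp add: mrg)
  have an: "as X X Y' \<cdot> (idm (X \<odot> X) \<otimes> u) = (idm X \<otimes> (idm X \<otimes> u)) \<cdot> as X X Y"
    using as_nat[of "idm X" "idm X" u] u by simp
  have n2: "(as X X Y' \<otimes> idm A) \<cdot> (((idm (X \<odot> X) \<otimes> u) \<otimes> idm A) \<cdot> k2) = ((idm X \<otimes> (idm X \<otimes> u)) \<otimes> idm A) \<cdot> ((as X X Y \<otimes> idm A) \<cdot> k2)"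
    if "ar k2" "cd k2 = ((X \<odot> X) \<odot> Y) \<odot> A" for k2
    using u that by (simp add: mrg an)
  have bn: "br X Y' \<cdot> (idm X \<otimes> u) = (u \<otimes> idm X) \<cdot> br X Y"
    using br_nat[of "idm X" u] u by simp
  have bn': "(idm X \<otimes> br X Y') \<cdot> (idm X \<otimes> (idm X \<otimes> u)) = (idm X \<otimes> (u \<otimes> idm X)) \<cdot> (idm X \<otimes> br X Y)"
    using u by (simp add: mrg bn)
  have n3: "((idm X \<otimes> br X Y') \<otimes> idm A) \<cdot> (((idm X \<otimes> (idm X \<otimes> u)) \<otimes> idm A) \<cdot> k2) = ((idm X \<otimes> (u \<otimes> idm X)) \<otimes> idm A) \<cdot> (((idm X \<otimes> br X Y) \<otimes> idm A) \<cdot> k2)"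
    if "ar k2" "cd k2 = (X \<odot> (X \<odot> Y)) \<odot> A" for k2
  proof -
    have "((idm X \<otimes> br X Y') \<otimes> idm A) \<cdot> (((idm X \<otimes> (idm X \<otimes> u)) \<otimes> idm A) \<cdot> k2) = (((idm X \<otimes> br X Y') \<cdot> (idm X \<otimes> (idm X \<otimes> u))) \<otimes> idm A) \<cdot> k2"
      using u that by (simp add: inter_k)
    also have "\<dots> = (((idm X \<otimes> (u \<otimes> idm X)) \<cdot> (idm X \<otimes> br X Y)) \<otimes> idm A) \<cdot> k2" by (simp only: bn')
    also have "\<dots> = ((idm X \<otimes> (u \<otimes> idm X)) \<otimes> idm A) \<cdot> (((idm X \<otimes> br X Y) \<otimes> idm A) \<cdot> k2)"
      using u that by (simp add: inter_k)
    finally show ?thesis .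
  qed
  have n4: "as X (Y' \<odot> X) A \<cdot> (((idm X \<otimes> (u \<otimes> idm X)) \<otimes> idm A) \<cdot> k2) = (idm X \<otimes> ((u \<otimes> idm X) \<otimes> idm A)) \<cdot> (as X (Y \<odot> X) A \<cdot> k2)"
    if "ar k2" "cd k2 = (X \<odot> (Y \<odot> X)) \<odot> A" for k2
    using u that as_nat_k[of "idm X" "u \<otimes> idm X" "idm A" k2] by simp
  have an2: "as Y' X A \<cdot> ((u \<otimes> idm X) \<otimes> idm A) = (u \<otimes> idm (X \<odot> A)) \<cdot> as Y X A"
    using as_nat[of u "idm X" "idm A"] u by simp
  have n5: "(idm X \<otimes> as Y' X A) \<cdot> ((idm X \<otimes> ((u \<otimes> idm X) \<otimes> idm A)) \<cdot> k2) = (idm X \<otimes> (u \<otimes> idm (X \<odot> A))) \<cdot> ((idm X \<otimes> as Y X A) \<cdot> k2)"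
    if "ar k2" "cd k2 = X \<odot> ((Y \<odot> X) \<odot> A)" for k2
  proof -
    have "(idm X \<otimes> as Y' X A) \<cdot> ((idm X \<otimes> ((u \<otimes> idm X) \<otimes> idm A)) \<cdot> k2) = (idm X \<otimes> (as Y' X A \<cdot> ((u \<otimes> idm X) \<otimes> idm A))) \<cdot> k2"
      using u that by (simp add: inter_k)
    also have "\<dots> = (idm X \<otimes> ((u \<otimes> idm (X \<odot> A)) \<cdot> as Y X A)) \<cdot> k2" by (simp only: an2)
    also have "\<dots> = (idm X \<otimes> (u \<otimes> idm (X \<odot> A))) \<cdot> ((idm X \<otimes> as Y X A) \<cdot> k2)"
      using u that by (simp add: inter_k)
    finally show ?thesis .
  qed
  show ?thesis using u k by (simp add: n1 n2 n3 n4 n5)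
qed


lemma C1_k:
  assumes k: "ar k" "cd k = X \<odot> A"
  shows "RR X A (X \<odot> A) \<cdot> (((as X X A \<cdot> (cpy X \<otimes> idm A)) \<otimes> idm A) \<cdot> (ai X A A \<cdot> ((idm X \<otimes> cpy A) \<cdot> k)))
    = (idm X \<otimes> cpy (X \<odot> A)) \<cdot> (as X X A \<cdot> ((cpy X \<otimes> idm A) \<cdot> k))"
proof -
  have c1: "((idm X \<otimes> br X (X \<odot> A)) \<otimes> idm A) \<cdot> ((as X X (X \<odot> A) \<otimes> idm A) \<cdot> (((cpy X \<otimes> idm (X \<odot> A)) \<otimes> idm A) \<cdot>
      (((as X X A \<cdot> (cpy X \<otimes> idm A)) \<otimes> idm A) \<cdot> k2)))
    = ((idm X \<otimes> Pp X A) \<otimes> idm A) \<cdot> (((as X X A \<cdot> (cpy X \<otimes> idm A)) \<otimes> idm A) \<cdot> k2)"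
    if "ar k2" "cd k2 = (X \<odot> A) \<odot> A" for k2
    using that by (simp add: mrg lemP)
  have c3: "as X ((X \<odot> A) \<odot> X) A \<cdot> (((idm X \<otimes> Pp X A) \<otimes> idm A) \<cdot> k2) = (idm X \<otimes> (Pp X A \<otimes> idm A)) \<cdot> (as X (X \<odot> A) A \<cdot> k2)"
    if "ar k2" "cd k2 = (X \<odot> (X \<odot> A)) \<odot> A" for k2
    using that as_nat_k[of "idm X" "Pp X A" "idm A" k2] by simp
  have q: "((as X X A \<cdot> (cpy X \<otimes> idm A)) \<otimes> idm A) \<cdot> k2 = (as X X A \<otimes> idm A) \<cdot> (((cpy X \<otimes> idm A) \<otimes> idm A) \<cdot> k2)"
    if "ar k2" "cd k2 = (X \<odot> A) \<odot> A" for k2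
    using that by (simp add: mrg)
  have s1: "as X (X \<odot> A) A \<cdot> ((as X X A \<otimes> idm A) \<cdot> k2) = (idm X \<otimes> ai X A A) \<cdot> (as X X (A \<odot> A) \<cdot> (as (X \<odot> X) A A \<cdot> k2))"
    if "ar k2" "cd k2 = ((X \<odot> X) \<odot> A) \<odot> A" for k2
  proof -
    have i: "(idm X \<otimes> ai X A A) \<cdot> ((idm X \<otimes> as X A A) \<cdot> k3) = k3" if "ar k3" "cd k3 = X \<odot> ((X \<odot> A) \<odot> A)" for k3
      using that by (simp add: mrg)
    show ?thesis using that by (simp add: pentagon_k i)
  qed
  have s2: "as (X \<odot> X) A A \<cdot> (((cpy X \<otimes> idm A) \<otimes> idm A) \<cdot> (ai X A A \<cdot> k3)) = (cpy X \<otimes> idm (A \<odot> A)) \<cdot> k3"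
    if "ar k3" "cd k3 = X \<odot> (A \<odot> A)" for k3
    using that as_nat_k[of "cpy X" "idm A" "idm A" "ai X A A \<cdot> k3"] by simp
  have s3: "(cpy X \<otimes> idm (A \<odot> A)) \<cdot> ((idm X \<otimes> cpy A) \<cdot> k) = (idm (X \<odot> X) \<otimes> cpy A) \<cdot> ((cpy X \<otimes> idm A) \<cdot> k)"
    using k by (simp add: mrg)
  have s4: "as X X (A \<odot> A) \<cdot> ((idm (X \<odot> X) \<otimes> cpy A) \<cdot> k4) = (idm X \<otimes> (idm X \<otimes> cpy A)) \<cdot> (as X X A \<cdot> k4)"
    if "ar k4" "cd k4 = (X \<odot> X) \<odot> A" for k4
    using that as_nat_k[of "idm X" "idm X" "cpy A" k4] by simp
  have c5: "(idm X \<otimes> as (X \<odot> A) X A) \<cdot> ((idm X \<otimes> (Pp X A \<otimes> idm A)) \<cdot> ((idm X \<otimes> ai X A A) \<cdot> ((idm X \<otimes> (idm X \<otimes> cpy A)) \<cdot> k5)))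
     = (idm X \<otimes> cpy (X \<odot> A)) \<cdot> k5" if "ar k5" "cd k5 = X \<odot> (X \<odot> A)" for k5
    using that by (simp add: mrg C2)
  have "RR X A (X \<odot> A) \<cdot> (((as X X A \<cdot> (cpy X \<otimes> idm A)) \<otimes> idm A) \<cdot> (ai X A A \<cdot> ((idm X \<otimes> cpy A) \<cdot> k)))
     = (idm X \<otimes> as (X \<odot> A) X A) \<cdot> (as X ((X \<odot> A) \<odot> X) A \<cdot> (((idm X \<otimes> Pp X A) \<otimes> idm A) \<cdot> (((as X X A \<cdot> (cpy X \<otimes> idm A)) \<otimes> idm A) \<cdot> (ai X A A \<cdot> ((idm X \<otimes> cpy A) \<cdot> k)))))"
    using k by (simp add: c1)
  also have "\<dots> = (idm X \<otimes> as (X \<odot> A) X A) \<cdot> ((idm X \<otimes> (Pp X A \<otimes> idm A)) \<cdot> (as X (X \<odot> A) A \<cdot> (((as X X A \<cdot> (cpy X \<otimes> idm A)) \<otimes> idm A) \<cdot> (ai X A A \<cdot> ((idm X \<otimes> cpy A) \<cdot> k)))))"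
    using k by (simp add: c3)
  also have "\<dots> = (idm X \<otimes> as (X \<odot> A) X A) \<cdot> ((idm X \<otimes> (Pp X A \<otimes> idm A)) \<cdot> ((idm X \<otimes> ai X A A) \<cdot> (as X X (A \<odot> A) \<cdot> (as (X \<odot> X) A A \<cdot> (((cpy X \<otimes> idm A) \<otimes> idm A) \<cdot> (ai X A A \<cdot> ((idm X \<otimes> cpy A) \<cdot> k)))))))"
    using k by (simp add: q s1)
  also have "\<dots> = (idm X \<otimes> as (X \<odot> A) X A) \<cdot> ((idm X \<otimes> (Pp X A \<otimes> idm A)) \<cdot> ((idm X \<otimes> ai X A A) \<cdot> (as X X (A \<odot> A) \<cdot> ((idm (X \<odot> X) \<otimes> cpy A) \<cdot> ((cpy X \<otimes> idm A) \<cdot> k)))))"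
    using k by (simp add: s2 s3)
  also have "\<dots> = (idm X \<otimes> as (X \<odot> A) X A) \<cdot> ((idm X \<otimes> (Pp X A \<otimes> idm A)) \<cdot> ((idm X \<otimes> ai X A A) \<cdot> ((idm X \<otimes> (idm X \<otimes> cpy A)) \<cdot> (as X X A \<cdot> ((cpy X \<otimes> idm A) \<cdot> k)))))"
    using k by (simp add: s4)
  also have "\<dots> = (idm X \<otimes> cpy (X \<odot> A)) \<cdot> (as X X A \<cdot> ((cpy X \<otimes> idm A) \<cdot> k))"
    using k by (simp add: c5)
  finally show ?thesis .
qed


lemma lemJ:
  assumes p: "ar p" "dm p = A" "cd p = X"
  shows "(pz X A p \<otimes> idm A) \<cdot> cpy A = ((as X X A \<cdot> (cpy X \<otimes> idm A)) \<otimes> idm A) \<cdot> (ai X A A \<cdot> ((idm X \<otimes> cpy A) \<cdot> ((p \<otimes> idm A) \<cdot> cpy A)))"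
proof -
  have j1: "(pz X A p \<otimes> idm A) \<cdot> cpy A = ((as X X A \<cdot> (cpy X \<otimes> idm A)) \<otimes> idm A) \<cdot> ((((p \<otimes> idm A) \<cdot> cpy A) \<otimes> idm A) \<cdot> cpy A)"
    using p by (simp add: mrg)
  have j2: "(((p \<otimes> idm A) \<cdot> cpy A) \<otimes> idm A) \<cdot> cpy A = ((p \<otimes> idm A) \<otimes> idm A) \<cdot> ((cpy A \<otimes> idm A) \<cdot> cpy A)"
    using p by (simp add: mrg)
  have j3: "(cpy A \<otimes> idm A) \<cdot> cpy A = ai A A A \<cdot> ((idm A \<otimes> cpy A) \<cdot> cpy A)"
  proof -
    have "ai A A A \<cdot> (as A A A \<cdot> ((cpy A \<otimes> idm A) \<cdot> cpy A)) = ai A A A \<cdot> ((idm A \<otimes> cpy A) \<cdot> cpy A)"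
      by (simp only: coassoc)
    then show ?thesis by simp
  qed
  have j4: "((p \<otimes> idm A) \<otimes> idm A) \<cdot> (ai A A A \<cdot> k) = ai X A A \<cdot> ((p \<otimes> idm (A \<odot> A)) \<cdot> k)"
    if "ar k" "cd k = A \<odot> (A \<odot> A)" for k
    using that p ai_nat_k[of p "idm A" "idm A" k] by simp
  have j5: "(p \<otimes> idm (A \<odot> A)) \<cdot> ((idm A \<otimes> cpy A) \<cdot> cpy A) = (idm X \<otimes> cpy A) \<cdot> ((p \<otimes> idm A) \<cdot> cpy A)"
    using p by (simp add: mrg)
  show ?thesis using p by (simp only: j1 j2 j3 j4 j5 cpy_ar id_ar ten_ar comp_ar ten_dm ten_cd comp_cd comp_dm)
qed

lemma C0:
  assumes p: "ar p" "dm p = A" "cd p = X"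
  shows "(idm X \<otimes> cpy (X \<odot> A)) \<cdot> pz X A p = RR X A (X \<odot> A) \<cdot> ((pz X A p \<otimes> idm A) \<cdot> cpy A)"
proof -
  have "RR X A (X \<odot> A) \<cdot> ((pz X A p \<otimes> idm A) \<cdot> cpy A) =
     RR X A (X \<odot> A) \<cdot> (((as X X A \<cdot> (cpy X \<otimes> idm A)) \<otimes> idm A) \<cdot> (ai X A A \<cdot> ((idm X \<otimes> cpy A) \<cdot> ((p \<otimes> idm A) \<cdot> cpy A))))"
    using p by (simp only: lemJ)
  also have "\<dots> = (idm X \<otimes> cpy (X \<odot> A)) \<cdot> pz X A p"
    using p C1_k[of "(p \<otimes> idm A) \<cdot> cpy A" X A] by simp
  finally show ?thesis by simp
qed

lemma asC_form:
  assumes p: "ar p" "dm p = A" "cd p = X" and u: "ar u" "dm u = X \<odot> A" "cd u = Y"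
  shows "(idm X \<otimes> ((u \<otimes> idm (X \<odot> A)) \<cdot> cpy (X \<odot> A))) \<cdot> pz X A p = RR X A Y \<cdot> ((((idm X \<otimes> u) \<cdot> pz X A p) \<otimes> idm A) \<cdot> cpy A)"
proof -
  have "(idm X \<otimes> ((u \<otimes> idm (X \<odot> A)) \<cdot> cpy (X \<odot> A))) \<cdot> pz X A p = (idm X \<otimes> (u \<otimes> idm (X \<odot> A))) \<cdot> ((idm X \<otimes> cpy (X \<odot> A)) \<cdot> pz X A p)"
    using p u by (simp add: mrg)
  also have "\<dots> = (idm X \<otimes> (u \<otimes> idm (X \<odot> A))) \<cdot> (RR X A (X \<odot> A) \<cdot> ((pz X A p \<otimes> idm A) \<cdot> cpy A))"
    using p by (simp only: C0)
  also have "\<dots> = RR X A Y \<cdot> (((idm X \<otimes> u) \<otimes> idm A) \<cdot> ((pz X A p \<otimes> idm A) \<cdot> cpy A))"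
    using p u RR_nat[of u "X \<odot> A" Y "(pz X A p \<otimes> idm A) \<cdot> cpy A" X A] by simp
  also have "\<dots> = RR X A Y \<cdot> ((((idm X \<otimes> u) \<cdot> pz X A p) \<otimes> idm A) \<cdot> cpy A)"
    using p u by (simp add: mrg)
  finally show ?thesis .
qed

lemma asC:
  assumes p: "ar p" "dm p = A" "cd p = X"
    and u1: "ar u1" "dm u1 = X \<odot> A" "cd u1 = Y"
    and u2: "ar u2" "dm u2 = X \<odot> A" "cd u2 = Y"
    and eq: "(idm X \<otimes> u1) \<cdot> pz X A p = (idm X \<otimes> u2) \<cdot> pz X A p"
  shows "(idm X \<otimes> ((u1 \<otimes> idm (X \<odot> A)) \<cdot> cpy (X \<odot> A))) \<cdot> pz X A p = (idm X \<otimes> ((u2 \<otimes> idm (X \<odot> A)) \<cdot> cpy (X \<odot> A))) \<cdot> pz X A p"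
  using asC_form[OF p u1] asC_form[OF p u2] eq by simp


lemma uniq_form:
  assumes p: "ar p" "dm p = A" "cd p = X"
    and rho: "ar \<rho>" "dm \<rho> = A" "cd \<rho> = (X \<odot> (X \<odot> A)) \<odot> F"
    and k: "ar k" "dm k = X \<odot> A" "cd k = (X \<odot> A) \<odot> F"
    and A1: "as X (X \<odot> A) F \<cdot> \<rho> = (idm X \<otimes> k) \<cdot> pz X A p"
    and kE: "ar kE" "dm kE = X \<odot> A" "cd kE = X \<odot> A"
    and m: "ar m" "dm m = (X \<odot> A) \<odot> (X \<odot> A)" "cd m = F"
    and kdef: "k = (idm (X \<odot> A) \<otimes> m) \<cdot> (as (X \<odot> A) (X \<odot> A) (X \<odot> A) \<cdot> ((cpy (X \<odot> A) \<otimes> idm (X \<odot> A)) \<cdot> ((kE \<otimes> idm (X \<odot> A)) \<cdot> cpy (X \<odot> A))))"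
    and kEq: "(idm X \<otimes> kE) \<cdot> pz X A p = pz X A p"
    and g: "ar g" "dm g = X \<odot> A" "cd g = E'"
  shows "((idm X \<otimes> g) \<otimes> idm F) \<cdot> \<rho> = ai X E' F \<cdot> ((idm X \<otimes> (idm E' \<otimes> (m \<cdot> cpy (X \<odot> A)))) \<cdot> ((idm X \<otimes> ((g \<otimes> idm (X \<odot> A)) \<cdot> cpy (X \<odot> A))) \<cdot> pz X A p))"
proof -
  let ?E = "X \<odot> A"
  let ?W = "(g \<otimes> idm F) \<cdot> ((idm ?E \<otimes> m) \<cdot> (as ?E ?E ?E \<cdot> (cpy ?E \<otimes> idm ?E)))"
  have n: "as X E' F \<cdot> (((idm X \<otimes> g) \<otimes> idm F) \<cdot> \<rho>) = (idm X \<otimes> (g \<otimes> idm F)) \<cdot> (as X ?E F \<cdot> \<rho>)"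
    using as_nat_k[of "idm X" g "idm F" \<rho>] g rho by simp
  have "((idm X \<otimes> g) \<otimes> idm F) \<cdot> \<rho> = ai X E' F \<cdot> (as X E' F \<cdot> (((idm X \<otimes> g) \<otimes> idm F) \<cdot> \<rho>))"
    using g rho by simp
  also have "\<dots> = ai X E' F \<cdot> ((idm X \<otimes> (g \<otimes> idm F)) \<cdot> ((idm X \<otimes> k) \<cdot> pz X A p))"
    by (simp only: n A1)
  also have "(idm X \<otimes> (g \<otimes> idm F)) \<cdot> ((idm X \<otimes> k) \<cdot> pz X A p) = (idm X \<otimes> ?W) \<cdot> ((idm X \<otimes> ((kE \<otimes> idm ?E) \<cdot> cpy ?E)) \<cdot> pz X A p)"
    using p g kE m unfolding kdef by (simp add: mrg)
  also have "(idm X \<otimes> ((kE \<otimes> idm ?E) \<cdot> cpy ?E)) \<cdot> pz X A p = (idm X \<otimes> cpy ?E) \<cdot> pz X A p"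
    using asC[OF p kE, of "idm ?E"] p kEq by simp
  also have "(idm X \<otimes> ?W) \<cdot> ((idm X \<otimes> cpy ?E) \<cdot> pz X A p) = (idm X \<otimes> (idm E' \<otimes> (m \<cdot> cpy ?E))) \<cdot> ((idm X \<otimes> ((g \<otimes> idm ?E) \<cdot> cpy ?E)) \<cdot> pz X A p)"
    using p g m by (simp add: mrg coassoc)
  finally show ?thesis .
qed

lemma uniq:
  assumes hc: "has_conditionals C"
    and p: "ar p" "dm p = A" "cd p = X"
    and g1: "ar g1" "dm g1 = X \<odot> A" "cd g1 = E'"
    and g2: "ar g2" "dm g2 = X \<odot> A" "cd g2 = E'"
    and e: "(idm X \<otimes> g1) \<cdot> pz X A p = (idm X \<otimes> g2) \<cdot> pz X A p"
    and dil: "dilation C (pz X A p) A (X \<odot> (X \<odot> A)) F \<rho>"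
  shows "((idm X \<otimes> g1) \<otimes> idm F) \<cdot> \<rho> = ((idm X \<otimes> g2) \<otimes> idm F) \<cdot> \<rho>"
proof -
  let ?E = "X \<odot> A"
  have rho: "ar \<rho>" "dm \<rho> = A" "cd \<rho> = (X \<odot> ?E) \<odot> F"
    using dil unfolding dilation_def hom_iff by auto
  have rm: "ru (X \<odot> ?E) \<cdot> ((idm (X \<odot> ?E) \<otimes> dl F) \<cdot> \<rho>) = pz X A p"
    using dil unfolding dilation_def by auto
  have "as X ?E F \<cdot> \<rho> \<in> hom C A (X \<odot> (?E \<odot> F))" using rho by (simp add: hom_iff)
  then obtain k where kc: "conditional C (as X ?E F \<cdot> \<rho>) A X (?E \<odot> F) k"
    using hc unfolding has_conditionals_def by blast
  have k: "ar k" "dm k = X \<odot> A" "cd k = ?E \<odot> F" using kc unfolding conditional_def hom_iff by auto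
  have mg: "marg C (as X ?E F \<cdot> \<rho>) X (?E \<odot> F) = p"
  proof -
    have "marg C (as X ?E F \<cdot> \<rho>) X (?E \<odot> F) = ru X \<cdot> ((idm X \<otimes> dl ?E) \<cdot> (ru (X \<odot> ?E) \<cdot> ((idm (X \<odot> ?E) \<otimes> dl F) \<cdot> \<rho>)))"
      unfolding marg_def using rho MA_k[of \<rho> X ?E F] by simp
    also have "\<dots> = p" using rm pz_dil[OF p] by simp
    finally show ?thesis .
  qed
  have A1: "as X ?E F \<cdot> \<rho> = (idm X \<otimes> k) \<cdot> pz X A p"
    using kc unfolding conditional_def mg by simp
  define kE where "kE = ru ?E \<cdot> ((idm ?E \<otimes> dl F) \<cdot> k)"
  have kE: "ar kE" "dm kE = X \<odot> A" "cd kE = X \<odot> A" unfolding kE_def using k by simp_all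
  have kEq: "(idm X \<otimes> kE) \<cdot> pz X A p = pz X A p"
  proof -
    have "(idm X \<otimes> kE) \<cdot> pz X A p = (idm X \<otimes> ru ?E) \<cdot> ((idm X \<otimes> (idm ?E \<otimes> dl F)) \<cdot> ((idm X \<otimes> k) \<cdot> pz X A p))"
      unfolding kE_def using k p by (simp add: mrg)
    also have "\<dots> = (idm X \<otimes> ru ?E) \<cdot> ((idm X \<otimes> (idm ?E \<otimes> dl F)) \<cdot> (as X ?E F \<cdot> \<rho>))"
      by (simp only: A1)
    also have "\<dots> = (idm X \<otimes> ru ?E) \<cdot> (as X ?E un \<cdot> ((idm (X \<odot> ?E) \<otimes> dl F) \<cdot> \<rho>))"
      using as_nat_k[of "idm X" "idm ?E" "dl F" \<rho>] rho by simp
    also have "\<dots> = ru (X \<odot> ?E) \<cdot> ((idm (X \<odot> ?E) \<otimes> dl F) \<cdot> \<rho>)"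
      using kelly[of X ?E] rho by (simp flip: assoc_r)
    finally show ?thesis using rm by simp
  qed
  have "k \<in> hom C ?E (?E \<odot> F)" using k by (simp add: hom_iff)
  then obtain m where mc: "conditional C k ?E ?E F m"
    using hc unfolding has_conditionals_def by blast
  have m: "ar m" "dm m = ?E \<odot> ?E" "cd m = F" using mc unfolding conditional_def hom_iff by auto
  have kdef: "k = (idm ?E \<otimes> m) \<cdot> (as ?E ?E ?E \<cdot> ((cpy ?E \<otimes> idm ?E) \<cdot> ((kE \<otimes> idm ?E) \<cdot> cpy ?E)))"
    using mc unfolding conditional_def marg_def kE_def by simp
  note f1 = uniq_form[OF p rho k A1 kE m kdef kEq g1]
  note f2 = uniq_form[OF p rho k A1 kE m kdef kEq g2]
  show ?thesis using f1 f2 asC[OF p g1 g2 e] by simp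
qed


lemma main:
  assumes hc: "has_conditionals C" and ph: "p \<in> hom C A X"
  shows "initial_dilation C p A X (X \<odot> A) (pz X A p)"
proof -
  have p: "ar p" "dm p = A" "cd p = X" using ph by (auto simp: hom_iff)
  have d0: "dilation C p A X (X \<odot> A) (pz X A p)"
    unfolding dilation_def using p pz_dil[OF p] by (simp add: hom_iff)
  have rest: "\<exists>f \<in> hom C (X \<odot> A) E'. (idm X \<otimes> f) \<cdot> pz X A p = \<pi>' \<and>
           (\<forall>g \<in> hom C (X \<odot> A) E'. (idm X \<otimes> g) \<cdot> pz X A p = \<pi>' \<longrightarrow>
              dil_equal C (pz X A p) A X (X \<odot> A) f g)"
    if dil': "dilation C p A X E' \<pi>'" for E' \<pi>'
  proof -
    have pi': "\<pi>' \<in> hom C A (X \<odot> E')" and mp: "ru X \<cdot> ((idm X \<otimes> dl E') \<cdot> \<pi>') = p"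
      using dil' unfolding dilation_def by auto
    obtain f where fc: "conditional C \<pi>' A X E' f"
      using hc pi' unfolding has_conditionals_def by blast
    have fh: "f \<in> hom C (X \<odot> A) E'" using fc unfolding conditional_def by auto
    have fe: "(idm X \<otimes> f) \<cdot> pz X A p = \<pi>'"
      using fc mp unfolding conditional_def marg_def by simp
    have "\<forall>g \<in> hom C (X \<odot> A) E'. (idm X \<otimes> g) \<cdot> pz X A p = \<pi>' \<longrightarrow> dil_equal C (pz X A p) A X (X \<odot> A) f g"
    proof (intro ballI impI)
      fix g assume gh: "g \<in> hom C (X \<odot> A) E'" and ge: "(idm X \<otimes> g) \<cdot> pz X A p = \<pi>'"
      have e: "(idm X \<otimes> f) \<cdot> pz X A p = (idm X \<otimes> g) \<cdot> pz X A p" using fe ge by simp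
      have f': "ar f" "dm f = X \<odot> A" "cd f = E'" using fh by (auto simp: hom_iff)
      have g': "ar g" "dm g = X \<odot> A" "cd g = E'" using gh by (auto simp: hom_iff)
      show "dil_equal C (pz X A p) A X (X \<odot> A) f g"
        unfolding dil_equal_def
        using uniq[OF hc p f' g' e] by blast
    qed
    then show ?thesis using fh fe by blast
  qed
  show ?thesis unfolding initial_dilation_def using d0 rest by blast
qed

end

theorem proposition4p13:
  fixes C :: "('o, 'm) mcat"
  assumes "markov_category C"
    and "has_conditionals C"
  shows "\<forall>A X p. p \<in> hom C A X \<longrightarrow> (\<exists>E \<pi>. initial_dilation C p A X E \<pi>)"
proof (intro allI impI)
  fix A X p assume "p \<in> hom C A X"
  interpret markov_category C by fact
  show "\<exists>E \<pi>. initial_dilation C p A X E \<pi>"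
    using main[OF assms(2) \<open>p \<in> hom C A X\<close>] by blast
qed

end
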